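(* Let $m,\ell\in\mathbb N$. There exist $L_2(m,\ell)\in\mathbb N$ and $K_2(m,\ell)\in\mathbb N$ such that the following holds: if $\varepsilon_1,\dots,\varepsilon_m\in\{\pm1\}$ and $i_1,\dots,i_m\ge K_2(m,\ell)$ are integers with $\mathrm{gap}(i_1,\dots,i_m)\le\ell$, then $$\varepsilon_1a_{i_1}+\dots+\varepsilon_ma_{i_m}=0\quad\text{implies}\quad\varepsilon_1\eta^{i_1}+\dots+\varepsilon_m\eta^{i_m}=0,$$ and if $\varepsilon_1a_{i_1}+\dots+\varepsilon_ma_{i_m}\ne0$, then $$|\varepsilon_1a_{i_1}+\dots+\varepsilon_ma_{i_m}|\ge\eta^{\min\{i_1,\dots,i_m\}-L_2(m,\ell)}.$$
   Context: Standing setting: $d\in\mathbb N$; $\lambda_1,\dots,\lambda_d\in\mathbb C$ are the roots of an irreducible polynomial of degree $d$ with integer coefficients; $c_1,\dots,c_d\in\mathbb C$; the dominant root condition holds: $\lambda_1$ is real, $\lambda_1>1$, $\lambda_1>\max\{|\lambda_2|,\dots,|\lambda_d|\}$, $c_1\ne0$; $a_n=c_1\lambda_1^n+\dots+c_d\lambda_d^n$ is a positive integer for every $n\in\mathbb N$; and $\eta:=\lambda_1$. For integers $i_1,\dots,i_m$, let $i_{(1)}\le\dots\le i_{(m)}$ be the same numbers sorted nondecreasingly, and $\mathrm{gap}(i_1,\dots,i_m)=\max\{i_{(2)}-i_{(1)},\dots,i_{(m)}-i_{(m-1)}\}$ (taken to be $0$ if $m=1$). *)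

theory Defs
  imports "HOL-Analysis.Analysis" "HOL-Computational_Algebra.Polynomial"
begin

definition gap :: "int list \<Rightarrow> int" where
  "gap xs = (let s = sort xs in
     if length s \<le> 1 then 0
     else Max ((\<lambda>j. s ! (Suc j) - s ! j) ` {..<length s - 1}))"

definition lrs :: "nat \<Rightarrow> (nat \<Rightarrow> complex) \<Rightarrow> (nat \<Rightarrow> complex) \<Rightarrow> nat \<Rightarrow> complex" where
  "lrs d c lam n = (\<Sum>k=1..d. c k * lam k ^ n)"

end

theory Submission
  imports Defs "HOL-Computational_Algebra.Polynomial_Factorial" "HOL-Computational_Algebra.Field_as_Ring"
begin


definition ev :: "complex \<Rightarrow> rat poly \<Rightarrow> complex" where
  "ev z Q = poly (map_poly of_rat Q) z"

lemma map_of_rat_mult: "map_poly (of_rat :: rat \<Rightarrow> complex) (p * q) = map_poly of_rat p * map_poly of_rat q"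
  by (intro poly_eqI) (simp add: coeff_map_poly coeff_mult of_rat_sum of_rat_mult)

lemma ev_mult: "ev z (p * q) = ev z p * ev z q"
  by (simp add: ev_def map_of_rat_mult)

lemma map_poly_add': "map_poly (of_rat :: rat \<Rightarrow> complex) (p + q) = map_poly of_rat p + map_poly of_rat q"
  by (intro poly_eqI) (simp add: coeff_map_poly of_rat_add)

lemma ev_add: "ev z (p + q) = ev z p + ev z q"
  by (simp add: ev_def map_poly_add')

lemma ev_sum_monom: "ev z (\<Sum>j<m. monom (of_int (e j)) (t j)) = (\<Sum>j<m. of_int (e j) * z ^ (t j))"
proof -
  have "map_poly (of_rat :: rat \<Rightarrow> complex) (\<Sum>j<m. monom (of_int (e j)) (t j))
        = (\<Sum>j<m. monom (of_int (e j)) (t j))"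
    by (intro poly_eqI) (simp add: coeff_map_poly coeff_sum of_rat_sum coeff_monom if_distrib cong: if_cong)
  then show ?thesis by (simp add: ev_def poly_sum poly_monom)
qed

lemma ev_const: "ev z [:c:] = of_rat c"
  by (simp add: ev_def map_poly_pCons)

lemma ev_int: "ev z (map_poly rat_of_int p) = poly (map_poly of_int p) z"
  by (simp add: ev_def map_poly_map_poly o_def)

lemma alg:
  fixes Q q :: "rat poly"
  assumes irr: "irreducible q" and qa: "ev a q = 0" and qb: "ev b q = 0" and Qa: "ev a Q = 0"
  shows "ev b Q = 0"
proof -
  define g where "g = gcd q Q"
  obtain h where qgh: "q = g * h" unfolding g_def by (metis gcd_dvd1 dvdE)
  from irreducibleD[OF irr qgh] have "g dvd 1 \<or> h dvd 1" .
  moreover have "\<not> g dvd 1"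
  proof
    assume "g dvd 1"
    then obtain c where gc: "g = [:c:]" "c dvd 1" using is_unit_poly_iff by blast
    then have "c \<noteq> 0" by auto
    have "fst (bezout_coefficients q Q) * q + snd (bezout_coefficients q Q) * Q = g"
      unfolding g_def by (rule bezout_coefficients_fst_snd)
    then have "ev a (fst (bezout_coefficients q Q) * q + snd (bezout_coefficients q Q) * Q) = ev a g"
      by simp
    then have "of_rat c = (0::complex)" using qa Qa gc by (simp add: ev_add ev_mult ev_const)
    with \<open>c \<noteq> 0\<close> show False by simp
  qed
  ultimately have "h dvd 1" by blast
  then have "q dvd g" using qgh by (simp add: mult_unit_dvd_iff)
  then have "q dvd Q" unfolding g_def using gcd_dvd2 dvd_trans by blast
  then obtain r where "Q = q * r" by blast
  then show ?thesis using qb by (simp add: ev_mult)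
qed



lemma asym:
  fixes f lam :: "nat \<Rightarrow> complex" and \<eta> :: real
  assumes d1: "d \<ge> 1" and l1: "lam 1 = of_real \<eta>" and eg: "\<eta> > 1"
    and dom: "\<And>k. k \<in> {2..d} \<Longrightarrow> cmod (lam k) < \<eta>" and f1: "f 1 \<noteq> 0"
  shows "\<exists>K L::nat. \<forall>n\<ge>K. cmod (\<Sum>k=1..d. f k * lam k ^ n) \<ge> \<eta> powi (int n - int L)"
proof -
  define g where "g n = (\<Sum>k=1..d. f k * lam k ^ n) / of_real (\<eta>^n)" for n
  have dset: "{1..d} = insert 1 {2..d}" using d1 by auto
  have g_eq: "g n = f 1 + (\<Sum>k=2..d. f k * (lam k / of_real \<eta>)^n)" for n
  proof -
    have "g n = (\<Sum>k=1..d. f k * (lam k / of_real \<eta>)^n)"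
      unfolding g_def by (simp add: sum_divide_distrib power_divide)
    also have "\<dots> = f 1 + (\<Sum>k=2..d. f k * (lam k / of_real \<eta>)^n)"
      using eg by (subst dset) (simp add: l1[simplified])
    finally show ?thesis .
  qed
  have "(\<lambda>n. \<Sum>k=2..d. f k * (lam k / of_real \<eta>)^n) \<longlonglongrightarrow> (\<Sum>k=2..d. f k * 0)"
  proof (intro tendsto_sum tendsto_mult tendsto_const LIMSEQ_power_zero)
    fix k assume "k \<in> {2..d}"
    then show "norm (lam k / of_real \<eta>) < 1" using dom eg by (simp add: norm_divide)
  qed
  then have "g \<longlonglongrightarrow> f 1 + 0" unfolding g_eq by (intro tendsto_add) auto
  then have "(\<lambda>n. cmod (g n)) \<longlonglongrightarrow> cmod (f 1)" by (simp add: tendsto_norm)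
  moreover have "cmod (f 1) / 2 < cmod (f 1)" using f1 by simp
  ultimately have "eventually (\<lambda>n. cmod (g n) > cmod (f 1) / 2) sequentially"
    by (rule order_tendstoD)
  then obtain K where K: "\<And>n. n \<ge> K \<Longrightarrow> cmod (g n) > cmod (f 1) / 2"
    by (auto simp: eventually_sequentially)
  obtain L where L: "2 / cmod (f 1) < \<eta> ^ L" using real_arch_pow[OF eg] by blast
  have "\<forall>n\<ge>K. cmod (\<Sum>k=1..d. f k * lam k ^ n) \<ge> \<eta> powi (int n - int L)"
  proof (intro allI impI)
    fix n assume "n \<ge> K"
    have epos: "\<eta>^n > 0" "\<eta>^L > 0" using eg by auto
    have "\<eta> powi (int n - int L) = \<eta>^n / \<eta>^L"
      using eg by (simp add: power_int_diff power_int_of_nat)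
    also have "\<dots> \<le> \<eta>^n * (cmod (f 1) / 2)"
    proof -
      have "1 / \<eta>^L < cmod (f 1) / 2" using L f1 epos
        by (simp add: field_simps)
      then show ?thesis using epos by (simp add: field_simps)
    qed
    also have "\<dots> \<le> \<eta>^n * cmod (g n)"
      using K[OF \<open>n \<ge> K\<close>] epos by (intro mult_left_mono) auto
    also have "\<eta>^n * cmod (g n) = cmod (\<Sum>k=1..d. f k * lam k ^ n)"
      unfolding g_def using epos eg by (simp add: norm_divide norm_power)
    finally show "cmod (\<Sum>k=1..d. f k * lam k ^ n) \<ge> \<eta> powi (int n - int L)" .
  qed
  then show ?thesis by blast
qed

lemma gap_bound:
  fixes xs :: "nat list"
  assumes ne: "xs \<noteq> []" and g: "gap (map int xs) \<le> int l" and x: "x \<in> set xs"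
  shows "x - Min (set xs) \<le> length xs * l"
proof -
  define s where "s = sort (map int xs)"
  have srt: "sorted s" and len: "length s = length xs" and st: "set s = int ` set xs"
    by (auto simp: s_def)
  have cons: "s ! Suc j - s ! j \<le> int l" if "j < length s - 1" for j
  proof -
    have "length s > 1" using that by auto
    then have "gap (map int xs) = Max ((\<lambda>j. s ! (Suc j) - s ! j) ` {..<length s - 1})"
      by (simp add: gap_def s_def Let_def)
    moreover have "s ! Suc j - s ! j \<le> Max ((\<lambda>j. s ! (Suc j) - s ! j) ` {..<length s - 1})"
      using that by (intro Max_ge) auto
    ultimately show ?thesis using g by simp
  qed
  have ind: "k < length s \<Longrightarrow> s ! k - s ! 0 \<le> int k * int l" for k
  proof (induction k)
    case 0 then show ?case by simp
  next
    case (Suc k)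
    then have "s ! Suc k - s ! k \<le> int l" by (intro cons) auto
    with Suc show ?case by (auto simp: algebra_simps)
  qed
  have mi: "Min (set xs) \<in> set xs" "Min (set xs) \<le> x" using ne x by auto
  obtain k where k: "k < length s" "s ! k = int x"
    using x st by (metis imageI in_set_conv_nth)
  have "int (Min (set xs)) \<in> set s" using mi st by auto
  then obtain k0 where "k0 < length s" "s ! k0 = int (Min (set xs))" by (metis in_set_conv_nth)
  then have "s ! 0 \<le> int (Min (set xs))" using srt by (metis le0 sorted_nth_mono)
  with ind[OF k(1)] k have "int x - int (Min (set xs)) \<le> int k * int l" by simp
  moreover have "int k * int l \<le> int (length xs) * int l" using k len by (intro mult_right_mono) auto
  ultimately have "int x - int (Min (set xs)) \<le> int (length xs * l)" by simp
  then show ?thesis using mi by linarith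
qed



theorem lemma6p3:
  fixes d :: nat and lam c :: "nat \<Rightarrow> complex" and p :: "int poly" and \<eta> :: real
  assumes irr: "irreducible (map_poly rat_of_int p)"
    and deg: "degree p = d"
    and roots: "map_poly of_int p = smult (of_int (lead_coeff p)) (\<Prod>k=1..d. [:- lam k, 1:])"
    and dom_real: "lam 1 = complex_of_real \<eta>"
    and dom_gt1: "\<eta> > 1"
    and dom: "\<And>k. k \<in> {2..d} \<Longrightarrow> cmod (lam k) < \<eta>"
    and c1: "c 1 \<noteq> 0"
    and pos: "\<And>n. n \<ge> 1 \<Longrightarrow> \<exists>z::nat. z > 0 \<and> lrs d c lam n = of_nat z"
  shows "\<forall>m l :: nat. \<exists>L2 K2 :: nat. \<forall>es :: int list. \<forall>is :: nat list.
           length es = m \<and> length is = m \<and> (\<forall>e\<in>set es. e = 1 \<or> e = -1)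
           \<and> (\<forall>i\<in>set is. i \<ge> K2) \<and> gap (map int is) \<le> int l \<longrightarrow>
           ((\<Sum>j<m. of_int (es ! j) * lrs d c lam (is ! j)) = 0
              \<longrightarrow> (\<Sum>j<m. of_int (es ! j) * \<eta> ^ (is ! j)) = 0)
         \<and> ((\<Sum>j<m. of_int (es ! j) * lrs d c lam (is ! j)) \<noteq> 0
              \<longrightarrow> cmod (\<Sum>j<m. of_int (es ! j) * lrs d c lam (is ! j))
                   \<ge> \<eta> powi (int (Min (set is)) - int L2))"
proof -
  define q where "q = map_poly rat_of_int p"
  have d1: "d \<ge> 1"
  proof (rule ccontr)
    assume "\<not> d \<ge> 1"
    then have "degree q = 0" using deg unfolding q_def
      by (subst degree_map_poly) auto
    then obtain a where qa: "q = [:a:]" by (metis degree_eq_zeroE)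
    have "q \<noteq> 0" "\<not> q dvd 1" using irr unfolding q_def by (auto simp: irreducible_def)
    then show False using qa by (simp add: is_unit_poly_iff dvd_field_iff)
  qed
  have qroot: "ev (lam k) q = 0" if "k \<in> {1..d}" for k
  proof -
    have "ev (lam k) q = poly (map_poly of_int p) (lam k)" unfolding q_def by (rule ev_int)
    also have "\<dots> = of_int (lead_coeff p) * (\<Prod>j=1..d. poly [:- lam j, 1:] (lam k))"
      by (simp add: roots poly_prod)
    also have "(\<Prod>j=1..d. poly [:- lam j, 1:] (lam k)) = 0"
      using that by (intro prod_zero) auto
    finally show ?thesis by simp
  qed
  define S where "S Q n = (\<Sum>k=1..d. c k * lam k ^ n * ev (lam k) Q)" for Q n
  define Pr where "Pr Q n L = ((S Q n = 0 \<longrightarrow> ev (lam 1) Q = 0) \<and>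
       (S Q n \<noteq> 0 \<longrightarrow> cmod (S Q n) \<ge> \<eta> powi (int n - int L)))" for Q n and L :: nat
  have pat: "\<exists>KL. \<forall>n\<ge>fst KL. Pr Q n (snd KL)" for Q
  proof (cases "ev (lam 1) Q = 0")
    case True
    have "ev (lam k) Q = 0" if "k \<in> {1..d}" for k
      using alg[OF irr[folded q_def] qroot qroot True] that d1 by auto
    then have "S Q n = 0" for n unfolding S_def by (intro sum.neutral) auto
    then show ?thesis unfolding Pr_def using True by auto
  next
    case False
    obtain K L where KL: "\<And>n. n \<ge> K \<Longrightarrow>
        cmod (\<Sum>k=1..d. (c k * ev (lam k) Q) * lam k ^ n) \<ge> \<eta> powi (int n - int L)"
      using asym[of d lam \<eta> "\<lambda>k. c k * ev (lam k) Q", OF d1 dom_real dom_gt1 dom] c1 False by auto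
    have "Pr Q n L" if "n \<ge> K" for n
    proof -
      have eq: "S Q n = (\<Sum>k=1..d. (c k * ev (lam k) Q) * lam k ^ n)"
        unfolding S_def by (simp add: mult_ac)
      have "cmod (S Q n) \<ge> \<eta> powi (int n - int L)" using KL[OF that] eq by simp
      moreover have "\<eta> powi (int n - int L) > 0" using dom_gt1 by simp
      ultimately show ?thesis unfolding Pr_def by auto
    qed
    then show ?thesis by (intro exI[of _ "(K, L)"]) auto
  qed
  then obtain h where h: "\<And>Q n. n \<ge> fst (h Q) \<Longrightarrow> Pr Q n (snd (h Q))" by metis
  show ?thesis
  proof (intro allI)
    fix m l :: nat
    define B where "B = m * l"
    define QP where "QP es ts = (\<Sum>j<m. monom (rat_of_int (es!j)) (ts!j))" for es ts :: "_ list"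
    define F where "F = (\<lambda>(es,ts). QP es ts) ` ({es. set es \<subseteq> {1,-1} \<and> length es = m} \<times>
                          {ts. set ts \<subseteq> {..B} \<and> length ts = m})"
    have finF: "finite F" unfolding F_def
      by (intro finite_imageI finite_cartesian_product finite_lists_length_eq) auto
    define L2 where "L2 = Max ((\<lambda>Q. snd (h Q)) ` F)"
    define K2 where "K2 = Max ((\<lambda>Q. fst (h Q)) ` F)"
    show "\<exists>L2 K2 :: nat. \<forall>es :: int list. \<forall>is :: nat list.
           length es = m \<and> length is = m \<and> (\<forall>e\<in>set es. e = 1 \<or> e = -1)
           \<and> (\<forall>i\<in>set is. i \<ge> K2) \<and> gap (map int is) \<le> int l \<longrightarrow>
           ((\<Sum>j<m. of_int (es ! j) * lrs d c lam (is ! j)) = 0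
              \<longrightarrow> (\<Sum>j<m. of_int (es ! j) * \<eta> ^ (is ! j)) = 0)
         \<and> ((\<Sum>j<m. of_int (es ! j) * lrs d c lam (is ! j)) \<noteq> 0
              \<longrightarrow> cmod (\<Sum>j<m. of_int (es ! j) * lrs d c lam (is ! j))
                   \<ge> \<eta> powi (int (Min (set is)) - int L2))"
    proof (rule exI[of _ L2], rule exI[of _ K2], intro allI impI)
      fix es :: "int list" and "is" :: "nat list"
      assume as: "length es = m \<and> length is = m \<and> (\<forall>e\<in>set es. e = 1 \<or> e = -1)
           \<and> (\<forall>i\<in>set is. i \<ge> K2) \<and> gap (map int is) \<le> int l"
      show "((\<Sum>j<m. of_int (es ! j) * lrs d c lam (is ! j)) = 0
              \<longrightarrow> (\<Sum>j<m. of_int (es ! j) * \<eta> ^ (is ! j)) = 0)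
         \<and> ((\<Sum>j<m. of_int (es ! j) * lrs d c lam (is ! j)) \<noteq> 0
              \<longrightarrow> cmod (\<Sum>j<m. of_int (es ! j) * lrs d c lam (is ! j))
                   \<ge> \<eta> powi (int (Min (set is)) - int L2))"
      proof (cases "m = 0")
        case True then show ?thesis by simp
      next
        case False
        then have ne: "is \<noteq> []" using as by auto
        define i0 where "i0 = Min (set is)"
        define ts where "ts = map (\<lambda>i. i - i0) is"
        define Q where "Q = QP es ts"
        have lts: "length ts = m" using as by (simp add: ts_def)
        have i0le: "i0 \<le> is ! j" if "j < m" for j
          unfolding i0_def using that as by (intro Min_le) auto
        have isj: "is ! j = i0 + ts ! j" if "j < m" for j
          using i0le[OF that] that as by (simp add: ts_def)
        have tsB: "set ts \<subseteq> {..B}"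
        proof
          fix t assume "t \<in> set ts"
          then obtain i where i: "i \<in> set is" "t = i - i0" unfolding ts_def by auto
          have "i - Min (set is) \<le> length is * l"
            using gap_bound[OF ne _ i(1)] as by blast
          then show "t \<in> {..B}" using i as by (simp add: B_def i0_def)
        qed
        have QF: "Q \<in> F" unfolding F_def Q_def using as lts tsB by auto
        have "i0 \<in> set is" unfolding i0_def using ne by auto
        then have "i0 \<ge> K2" using as by auto
        moreover have "K2 \<ge> fst (h Q)" unfolding K2_def using finF QF by (intro Max_ge) auto
        ultimately have PrQ: "Pr Q i0 (snd (h Q))" by (intro h) auto
        have L2ge: "L2 \<ge> snd (h Q)" unfolding L2_def using finF QF by (intro Max_ge) auto
        have evQ: "ev z Q = (\<Sum>j<m. of_int (es ! j) * z ^ (ts ! j))" for z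
          unfolding Q_def QP_def by (rule ev_sum_monom)
        have id1: "(\<Sum>j<m. of_int (es ! j) * lrs d c lam (is ! j)) = S Q i0"
        proof -
          have "(\<Sum>j<m. of_int (es ! j) * lrs d c lam (is ! j))
              = (\<Sum>j<m. \<Sum>k=1..d. c k * lam k ^ i0 * (of_int (es ! j) * lam k ^ (ts ! j)))"
            by (intro sum.cong refl) (simp add: isj lrs_def sum_distrib_left power_add mult_ac)
          also have "\<dots> = (\<Sum>k=1..d. \<Sum>j<m. c k * lam k ^ i0 * (of_int (es ! j) * lam k ^ (ts ! j)))"
            by (rule sum.swap)
          also have "\<dots> = S Q i0"
            unfolding S_def evQ by (simp add: sum_distrib_left)
          finally show ?thesis .
        qed
        have id2: "complex_of_real (\<Sum>j<m. of_int (es ! j) * \<eta> ^ (is ! j)) = lam 1 ^ i0 * ev (lam 1) Q"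
          unfolding evQ dom_real
          by (simp add: sum_distrib_left isj power_add mult_ac)
        have concl: ?thesis
        proof (intro conjI impI)
          assume "(\<Sum>j<m. of_int (es ! j) * lrs d c lam (is ! j)) = 0"
          then have "ev (lam 1) Q = 0" using PrQ id1 unfolding Pr_def by auto
          then have "complex_of_real (\<Sum>j<m. of_int (es ! j) * \<eta> ^ (is ! j)) = 0" using id2 by simp
          then show "(\<Sum>j<m. of_int (es ! j) * \<eta> ^ (is ! j)) = 0" by (simp only: of_real_eq_0_iff)
        next
          assume "(\<Sum>j<m. of_int (es ! j) * lrs d c lam (is ! j)) \<noteq> 0"
          then have "cmod (S Q i0) \<ge> \<eta> powi (int i0 - int (snd (h Q)))"
            using PrQ id1 unfolding Pr_def by auto
          moreover have "\<eta> powi (int i0 - int L2) \<le> \<eta> powi (int i0 - int (snd (h Q)))"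
            using L2ge dom_gt1 by (intro power_int_increasing) auto
          ultimately show "cmod (\<Sum>j<m. of_int (es ! j) * lrs d c lam (is ! j))
                   \<ge> \<eta> powi (int (Min (set is)) - int L2)"
            using id1 by (simp add: i0_def)
        qed
        then show ?thesis .
      qed
    qed
  qed
qed

end
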